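(* In a symmetric instance with $k$ signals ($2\le k\le n$), for every $s\in[-\infty,0]$ and every $s$-Pareto point collection $\mathcal P$, there exists a symmetric, direct and persuasive signaling scheme $\varphi^*$ with $k$ signals such that $u_{\mathcal S}(\varphi^* )=u_{\mathcal S}(\mathcal P)$ (and $u_{\mathcal R}(\varphi^* )=u_{\mathcal R}(\mathcal P)$).
   Context: Model: a receiver chooses one of the actions $[n]$; each action $i$ has a type $\theta_i$; the state $\boldsymbol\theta$ is drawn from a commonly known distribution $q$ over a finite set of type vectors; each type $t$ has receiver value $\rho(t)$ and sender value $\xi(t)$. A direct scheme with $k$ signals maps each state to a distribution over $k$ signals, each recommending an action; it is persuasive if for every signal $\sigma$ sent with positive probability recommending $i$, $\mathbb E[\rho(\theta_i)\mid\sigma]\ge\mathbb E[\rho(\theta_j)\mid\sigma]$ for all $j$; $u_{\mathcal S},u_{\mathcal R}$ denote expected utilities when the receiver follows. $\rho_E=\max_i\sum_{\boldsymbol\theta}q_{\boldsymbol\theta}\rho(\theta_i)$. Symmetric instance: $q_{\boldsymbol\theta}=q_{\boldsymbol\theta'}$ whenever $\boldsymbol\theta'$ is a permutation of $\boldsymbol\theta$; types in a state are pairwise distinct. For a permutation $\pi$ of $[n]$ let $(\pi\cdot\boldsymbol\theta)_{\pi(l)}=\theta_l$. A symmetric scheme is a direct scheme whose signals recommend actions $1,\dots,k$ and with $\varphi(\pi\cdot\boldsymbol\theta,\pi(i))=\varphi(\boldsymbol\theta,i)$ for all states, all $i\in[k]$, and all permutations $\pi$ of $[n]$ with $\pi([k])=[k]$.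 Identify each type $c$ with the point $(\rho(c),\xi(c))$. For a $k$-set $C$ of types, $q_C=\Pr[\{\theta_1,\dots,\theta_k\}=C]$. For $s\in(-\infty,0]$, $p\in\mathrm{conv}(C)$ corresponds to slope $s$ if it maximizes $y-sx$ over $(x,y)\in\mathrm{conv}(C)$; it corresponds to slope $-\infty$ if it maximizes the first coordinate over $\mathrm{conv}(C)$. A point collection $\mathcal P$ assigns to each $C$ with $q_C>0$ a point $p(C)=(p_{\mathcal R}(C),p_{\mathcal S}(C))\in\mathrm{conv}(C)$; $u_{\mathcal S}(\mathcal P)=\sum_Cq_Cp_{\mathcal S}(C)$, $u_{\mathcal R}(\mathcal P)=\sum_Cq_Cp_{\mathcal R}(C)$. $\mathcal P$ is $s$-Pareto if every $p(C)$ corresponds to slope $s$ and $u_{\mathcal R}(\mathcal P)\ge\rho_E$. *)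

theory Defs
  imports "HOL-Analysis.Analysis"
begin

text \<open>Actions are indexed by 1..n, signals of a symmetric scheme by 1..k (signal i recommends
action i).\<close>

definition states :: "nat \<Rightarrow> 'a set \<Rightarrow> (nat \<Rightarrow> 'a) set" where
  "states n T = Pi\<^sub>E {1..n} (\<lambda>_. T)"

definition perm_act :: "(nat \<Rightarrow> nat) \<Rightarrow> (nat \<Rightarrow> 'a) \<Rightarrow> (nat \<Rightarrow> 'a)" where
  "perm_act \<pi> \<theta> = \<theta> \<circ> inv \<pi>"

definition is_distribution :: "nat \<Rightarrow> 'a set \<Rightarrow> ((nat \<Rightarrow> 'a) \<Rightarrow> real) \<Rightarrow> bool" where
  "is_distribution n T q \<longleftrightarrow> (\<forall>\<theta>\<in>states n T. q \<theta> \<ge> 0) \<and> sum q (states n T) = 1"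

definition symmetric_instance :: "nat \<Rightarrow> 'a set \<Rightarrow> ((nat \<Rightarrow> 'a) \<Rightarrow> real) \<Rightarrow> bool" where
  "symmetric_instance n T q \<longleftrightarrow> is_distribution n T q
     \<and> (\<forall>\<pi> \<theta>. \<pi> permutes {1..n} \<longrightarrow> \<theta> \<in> states n T \<longrightarrow> q (perm_act \<pi> \<theta>) = q \<theta>)
     \<and> (\<forall>\<theta>\<in>states n T. q \<theta> > 0 \<longrightarrow> inj_on \<theta> {1..n})"

text \<open>phi theta i = probability of sending the signal recommending action i (i in 1..k) in state theta.\<close>
definition symmetric_scheme :: "nat \<Rightarrow> nat \<Rightarrow> 'a set \<Rightarrow> ((nat \<Rightarrow> 'a) \<Rightarrow> nat \<Rightarrow> real) \<Rightarrow> bool" where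
  "symmetric_scheme n k T \<phi> \<longleftrightarrow>
     (\<forall>\<theta>\<in>states n T. (\<forall>i\<in>{1..k}. \<phi> \<theta> i \<ge> 0) \<and> (\<Sum>i=1..k. \<phi> \<theta> i) = 1)
     \<and> (\<forall>\<pi> \<theta> i. \<pi> permutes {1..n} \<longrightarrow> \<pi> ` {1..k} = {1..k} \<longrightarrow> \<theta> \<in> states n T \<longrightarrow> i \<in> {1..k}
          \<longrightarrow> \<phi> (perm_act \<pi> \<theta>) (\<pi> i) = \<phi> \<theta> i)"

definition signal_prob :: "nat \<Rightarrow> 'a set \<Rightarrow> ((nat \<Rightarrow> 'a) \<Rightarrow> real) \<Rightarrow> ((nat \<Rightarrow> 'a) \<Rightarrow> nat \<Rightarrow> real) \<Rightarrow> nat \<Rightarrow> real" where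
  "signal_prob n T q \<phi> i = (\<Sum>\<theta>\<in>states n T. q \<theta> * \<phi> \<theta> i)"

definition cond_value :: "nat \<Rightarrow> 'a set \<Rightarrow> ((nat \<Rightarrow> 'a) \<Rightarrow> real) \<Rightarrow> ('a \<Rightarrow> real)
     \<Rightarrow> ((nat \<Rightarrow> 'a) \<Rightarrow> nat \<Rightarrow> real) \<Rightarrow> nat \<Rightarrow> nat \<Rightarrow> real" where
  "cond_value n T q \<rho> \<phi> i j =
     (\<Sum>\<theta>\<in>states n T. q \<theta> * \<phi> \<theta> i * \<rho> (\<theta> j)) / signal_prob n T q \<phi> i"

definition persuasive :: "nat \<Rightarrow> nat \<Rightarrow> 'a set \<Rightarrow> ((nat \<Rightarrow> 'a) \<Rightarrow> real) \<Rightarrow> ('a \<Rightarrow> real)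
     \<Rightarrow> ((nat \<Rightarrow> 'a) \<Rightarrow> nat \<Rightarrow> real) \<Rightarrow> bool" where
  "persuasive n k T q \<rho> \<phi> \<longleftrightarrow>
     (\<forall>i\<in>{1..k}. signal_prob n T q \<phi> i > 0 \<longrightarrow>
        (\<forall>j\<in>{1..n}. cond_value n T q \<rho> \<phi> i i \<ge> cond_value n T q \<rho> \<phi> i j))"

text \<open>Expected utility (f = xi gives u_S, f = rho gives u_R) when the receiver follows.\<close>
definition scheme_utility :: "nat \<Rightarrow> nat \<Rightarrow> 'a set \<Rightarrow> ((nat \<Rightarrow> 'a) \<Rightarrow> real) \<Rightarrow> ('a \<Rightarrow> real)
     \<Rightarrow> ((nat \<Rightarrow> 'a) \<Rightarrow> nat \<Rightarrow> real) \<Rightarrow> real" where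
  "scheme_utility n k T q f \<phi> = (\<Sum>\<theta>\<in>states n T. q \<theta> * (\<Sum>i=1..k. \<phi> \<theta> i * f (\<theta> i)))"

definition rho_E :: "nat \<Rightarrow> 'a set \<Rightarrow> ((nat \<Rightarrow> 'a) \<Rightarrow> real) \<Rightarrow> ('a \<Rightarrow> real) \<Rightarrow> real" where
  "rho_E n T q \<rho> = Max ((\<lambda>i. \<Sum>\<theta>\<in>states n T. q \<theta> * \<rho> (\<theta> i)) ` {1..n})"

definition qC :: "nat \<Rightarrow> nat \<Rightarrow> 'a set \<Rightarrow> ((nat \<Rightarrow> 'a) \<Rightarrow> real) \<Rightarrow> 'a set \<Rightarrow> real" where
  "qC n k T q C = (\<Sum>\<theta>\<in>{\<theta>\<in>states n T. \<theta> ` {1..k} = C}. q \<theta>)"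

definition conv_pts :: "('a \<Rightarrow> real) \<Rightarrow> ('a \<Rightarrow> real) \<Rightarrow> 'a set \<Rightarrow> (real \<times> real) set" where
  "conv_pts \<rho> \<xi> C = convex hull ((\<lambda>c. (\<rho> c, \<xi> c)) ` C)"

definition corresponds_slope :: "('a \<Rightarrow> real) \<Rightarrow> ('a \<Rightarrow> real) \<Rightarrow> ereal \<Rightarrow> 'a set \<Rightarrow> real \<times> real \<Rightarrow> bool" where
  "corresponds_slope \<rho> \<xi> s C p \<longleftrightarrow> p \<in> conv_pts \<rho> \<xi> C \<and>
     (if s = -\<infinity> then (\<forall>z\<in>conv_pts \<rho> \<xi> C. fst z \<le> fst p)
      else (\<forall>z\<in>conv_pts \<rho> \<xi> C. snd z - real_of_ereal s * fst z \<le> snd p - real_of_ereal s * fst p))"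

definition relevant_sets :: "nat \<Rightarrow> nat \<Rightarrow> 'a set \<Rightarrow> ((nat \<Rightarrow> 'a) \<Rightarrow> real) \<Rightarrow> 'a set set" where
  "relevant_sets n k T q = {C. C \<subseteq> T \<and> card C = k \<and> qC n k T q C > 0}"

text \<open>u(P) for a point collection P; f = fst gives u_R, f = snd gives u_S.\<close>
definition pc_utility :: "nat \<Rightarrow> nat \<Rightarrow> 'a set \<Rightarrow> ((nat \<Rightarrow> 'a) \<Rightarrow> real) \<Rightarrow> (real \<times> real \<Rightarrow> real)
     \<Rightarrow> ('a set \<Rightarrow> real \<times> real) \<Rightarrow> real" where
  "pc_utility n k T q f P = (\<Sum>C\<in>relevant_sets n k T q. qC n k T q C * f (P C))"

definition s_Pareto :: "nat \<Rightarrow> nat \<Rightarrow> 'a set \<Rightarrow> ((nat \<Rightarrow> 'a) \<Rightarrow> real) \<Rightarrow> ('a \<Rightarrow> real) \<Rightarrow> ('a \<Rightarrow> real)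
     \<Rightarrow> ereal \<Rightarrow> ('a set \<Rightarrow> real \<times> real) \<Rightarrow> bool" where
  "s_Pareto n k T q \<rho> \<xi> s P \<longleftrightarrow>
     (\<forall>C\<in>relevant_sets n k T q. corresponds_slope \<rho> \<xi> s C (P C))
     \<and> pc_utility n k T q fst P \<ge> rho_E n T q \<rho>"

end

theory Submission
  imports Defs
begin

lemma hull_pullback:
  fixes g :: "'a \<Rightarrow> 'b::real_vector"
  assumes fin: "finite S" and y: "y \<in> convex hull (g ` S)"
  shows "\<exists>u. (\<forall>x\<in>S. 0 \<le> u x) \<and> sum u S = 1 \<and> (\<Sum>x\<in>S. u x *\<^sub>R g x) = y"
proof -
  from y obtain w where w0: "\<forall>z\<in>g ` S. 0 \<le> w z" and w1: "sum w (g ` S) = 1"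
    and wy: "(\<Sum>z\<in>g ` S. w z *\<^sub>R z) = y"
    using convex_hull_finite[of "g ` S"] fin by auto
  define c where "c x = real (card {x'\<in>S. g x' = g x})" for x
  define u where "u x = w (g x) / c x" for x
  have cpos: "c x > 0" if "x \<in> S" for x
  proof -
    have "x \<in> {x'\<in>S. g x' = g x}" using that by auto
    moreover have "finite {x'\<in>S. g x' = g x}" using fin by simp
    ultimately have "card {x'\<in>S. g x' = g x} > 0" using card_gt_0_iff by blast
    then show ?thesis unfolding c_def by simp
  qed
  have fib: "(\<Sum>x\<in>{x'\<in>S. g x' = z}. u x *\<^sub>R h x) = w z *\<^sub>R h' z"
    if zS: "z \<in> g ` S" and hh: "\<And>x. x \<in> S \<Longrightarrow> g x = z \<Longrightarrow> h x = h' z" for z and h :: "'a \<Rightarrow> 'c::real_vector" and h'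
  proof -
    have "(\<Sum>x\<in>{x'\<in>S. g x' = z}. u x *\<^sub>R h x) = (\<Sum>x\<in>{x'\<in>S. g x' = z}. (w z / real (card {x'\<in>S. g x' = z})) *\<^sub>R h' z)"
      by (rule sum.cong) (simp_all add: u_def c_def hh)
    also have "\<dots> = w z *\<^sub>R h' z"
    proof -
      obtain x0 where "x0 \<in> S" "g x0 = z" using zS by blast
      then have "x0 \<in> {x'\<in>S. g x' = z}" by simp
      moreover have "finite {x'\<in>S. g x' = z}" using fin by simp
      ultimately have "card {x'\<in>S. g x' = z} > 0" using card_gt_0_iff by blast
      then show ?thesis by (simp only: sum_constant_scaleR) (simp add: scaleR_scaleR)
    qed
    finally show ?thesis .
  qed
  have "(\<Sum>x\<in>S. u x *\<^sub>R g x) = (\<Sum>z\<in>g ` S. (\<Sum>x\<in>{x'\<in>S. g x' = z}. u x *\<^sub>R g x))"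
    by (rule sum.group[OF fin finite_imageI[OF fin] subset_refl, where h="\<lambda>x. u x *\<^sub>R g x", symmetric])
  also have "\<dots> = (\<Sum>z\<in>g ` S. w z *\<^sub>R z)"
    by (rule sum.cong[OF refl], rule fib) auto
  finally have A: "(\<Sum>x\<in>S. u x *\<^sub>R g x) = y" using wy by simp
  have "sum u S = (\<Sum>z\<in>g ` S. (\<Sum>x\<in>{x'\<in>S. g x' = z}. u x *\<^sub>R (1::real)))"
    using sum.group[OF fin finite_imageI[OF fin] subset_refl, where h="\<lambda>x. u x *\<^sub>R (1::real)", symmetric] by simp
  also have "\<dots> = (\<Sum>z\<in>g ` S. w z *\<^sub>R (1::real))"
    by (rule sum.cong[OF refl], rule fib) auto
  finally have B: "sum u S = 1" using w1 by simp
  have C: "\<forall>x\<in>S. 0 \<le> u x" using w0 cpos by (auto simp: u_def intro!: divide_nonneg_pos)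
  show ?thesis using A B C by blast
qed


lemma perm_act_app: "\<pi> permutes S \<Longrightarrow> perm_act \<pi> \<theta> (\<pi> i) = \<theta> i"
  by (simp add: perm_act_def permutes_inverses(2))

lemma perm_act_states:
  assumes p: "\<pi> permutes {1..n}" and th: "\<theta> \<in> states n T"
  shows "perm_act \<pi> \<theta> \<in> states n T"
proof -
  have ip: "inv \<pi> permutes {1..n}" using p by (rule permutes_inv)
  show ?thesis using th unfolding states_def perm_act_def PiE_def Pi_def extensional_def
    using permutes_in_image[OF ip] permutes_not_in[OF ip] by auto
qed

lemma perm_act_bij:
  assumes p: "\<pi> permutes {1..n}"
  shows "bij_betw (perm_act \<pi>) (states n T) (states n T)"
proof (rule bij_betw_byWitness[where f'="perm_act (inv \<pi>)"])
  have ip: "inv \<pi> permutes {1..n}" using p by (rule permutes_inv)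
  have bp: "bij \<pi>" using p by (rule permutes_bij)
  show "\<forall>a\<in>states n T. perm_act (inv \<pi>) (perm_act \<pi> a) = a"
    by (simp add: perm_act_def inv_inv_eq[OF bp] o_assoc[symmetric] permutes_inv_o(2)[OF p])
  show "\<forall>a\<in>states n T. perm_act \<pi> (perm_act (inv \<pi>) a) = a"
    by (simp add: perm_act_def inv_inv_eq[OF bp] o_assoc[symmetric] permutes_inv_o(1)[OF p])
  show "perm_act \<pi> ` states n T \<subseteq> states n T" using perm_act_states[OF p] by auto
  show "perm_act (inv \<pi>) ` states n T \<subseteq> states n T" using perm_act_states[OF ip] by auto
qed

lemma sum_perm_inv:
  assumes si: "symmetric_instance n T q" and p: "\<pi> permutes {1..n}"
  shows "(\<Sum>\<theta>\<in>states n T. q \<theta> * g (perm_act \<pi> \<theta>)) = (\<Sum>\<theta>\<in>states n T. q \<theta> * g \<theta>)"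
proof -
  have b: "bij_betw (perm_act \<pi>) (states n T) (states n T)" by (rule perm_act_bij[OF p])
  have "(\<Sum>\<theta>\<in>states n T. q \<theta> * g \<theta>) = (\<Sum>\<theta>\<in>states n T. q (perm_act \<pi> \<theta>) * g (perm_act \<pi> \<theta>))"
    using sum.reindex_bij_betw[OF b, of "\<lambda>\<theta>. q \<theta> * g \<theta>"] by simp
  also have "\<dots> = (\<Sum>\<theta>\<in>states n T. q \<theta> * g (perm_act \<pi> \<theta>))"
    using si p unfolding symmetric_instance_def by (intro sum.cong) auto
  finally show ?thesis by simp
qed


theorem lemma3p4:
  fixes n k :: nat and T :: "'a set" and q :: "(nat \<Rightarrow> 'a) \<Rightarrow> real"
    and \<rho> \<xi> :: "'a \<Rightarrow> real" and s :: ereal and P :: "'a set \<Rightarrow> real \<times> real"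
  assumes "finite T" and "2 \<le> k" and "k \<le> n"
    and "symmetric_instance n T q"
    and "s \<le> 0"
    and "s_Pareto n k T q \<rho> \<xi> s P"
  shows "\<exists>\<phi>. symmetric_scheme n k T \<phi> \<and> persuasive n k T q \<rho> \<phi>
           \<and> scheme_utility n k T q \<xi> \<phi> = pc_utility n k T q snd P
           \<and> scheme_utility n k T q \<rho> \<phi> = pc_utility n k T q fst P"
  proof -
  let ?St = "states n T"
  have si: "symmetric_instance n T q" by fact
  define R where "R = relevant_sets n k T q"
  define g where "g c = (\<rho> c, \<xi> c)" for c
  have finSt: "finite ?St" unfolding states_def using assms(1) by (simp add: finite_PiE)
  have finR: "finite R"
    by (rule finite_subset[of R "Pow T"]) (use assms(1) in \<open>auto simp: R_def relevant_sets_def\<close>)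
  have PinC: "P C \<in> convex hull (g ` C)" if "C \<in> R" for C
    using assms(6) that unfolding s_Pareto_def corresponds_slope_def conv_pts_def R_def g_def by blast
  have finC: "finite C" if "C \<in> R" for C
    using that assms(2) unfolding R_def relevant_sets_def by (auto intro: card_ge_0_finite)
  define lam where "lam C = (SOME u. (\<forall>x\<in>C. 0 \<le> u x) \<and> sum u C = 1 \<and> (\<Sum>x\<in>C. u x *\<^sub>R g x) = P C)" for C
  have lam: "(\<forall>x\<in>C. 0 \<le> lam C x) \<and> sum (lam C) C = 1 \<and> (\<Sum>x\<in>C. lam C x *\<^sub>R g x) = P C" if "C\<in>R" for C
    unfolding lam_def using hull_pullback[OF finC[OF that] PinC[OF that]] by (rule someI_ex)
  define \<phi> where "\<phi> \<theta> i = (if \<theta> ` {1..k} \<in> R then lam (\<theta> ` {1..k}) (\<theta> i) else 1 / real k)" for \<theta> i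
  have sumC: "(\<Sum>i=1..k. lam (\<theta>`{1..k}) (\<theta> i) * h (\<theta> i)) = (\<Sum>c\<in>\<theta>`{1..k}. lam (\<theta>`{1..k}) c * h c)"
    if "\<theta>`{1..k} \<in> R" for \<theta> and h :: "'a \<Rightarrow> real"
  proof -
    have "inj_on \<theta> {1..k}" using that unfolding R_def relevant_sets_def by (intro eq_card_imp_inj_on) auto
    then show ?thesis by (simp add: sum.reindex)
  qed
  have kpos: "real k > 0" using assms(2) by simp
  have sum1: "(\<Sum>i=1..k. \<phi> \<theta> i) = 1" for \<theta>
  proof (cases "\<theta>`{1..k} \<in> R")
    case True
    have "(\<Sum>i=1..k. \<phi> \<theta> i) = (\<Sum>i=1..k. lam (\<theta>`{1..k}) (\<theta> i) * (\<lambda>_. 1) (\<theta> i))"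
      using True by (simp add: \<phi>_def)
    also have "\<dots> = (\<Sum>c\<in>\<theta>`{1..k}. lam (\<theta>`{1..k}) c * (\<lambda>_. 1) c)" by (rule sumC[OF True])
    also have "\<dots> = 1" using lam[OF True] by simp
    finally show ?thesis .
  next
    case False then show ?thesis using kpos by (simp add: \<phi>_def)
  qed
  have pa_img: "perm_act \<pi> \<theta> ` {1..k} = \<theta> ` {1..k}" if p: "\<pi> permutes {1..n}" and pk: "\<pi> ` {1..k} = {1..k}" for \<pi> \<theta>
  proof -
    have "inv \<pi> ` {1..k} = {1..k}" using pk image_inv_f_f[OF permutes_inj[OF p], of "{1..k}"] by simp
    then show ?thesis unfolding perm_act_def image_comp[symmetric] by simp
  qed
  have scheme: "symmetric_scheme n k T \<phi>"
    unfolding symmetric_scheme_def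
  proof (intro conjI ballI allI impI)
    fix \<theta> i assume "i \<in> {1..k}"
    then show "\<phi> \<theta> i \<ge> 0" using lam unfolding \<phi>_def by auto
  next
    fix \<theta> show "(\<Sum>i=1..k. \<phi> \<theta> i) = 1" by (rule sum1)
  next
    fix \<pi> \<theta> i assume p: "\<pi> permutes {1..n}" and pk: "\<pi> ` {1..k} = {1..k}"
    show "\<phi> (perm_act \<pi> \<theta>) (\<pi> i) = \<phi> \<theta> i"
      unfolding \<phi>_def pa_img[OF p pk] perm_act_app[OF p] ..
  qed
  have util: "scheme_utility n k T q f \<phi> = (\<Sum>C\<in>R. qC n k T q C * (\<Sum>c\<in>C. lam C c * f c))" for f
  proof -
    have "scheme_utility n k T q f \<phi> = (\<Sum>\<theta>\<in>?St. if \<theta>`{1..k} \<in> R then q \<theta> * (\<Sum>c\<in>\<theta>`{1..k}. lam (\<theta>`{1..k}) c * f c) else 0)"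
      unfolding scheme_utility_def
    proof (rule sum.cong[OF refl])
      fix \<theta> assume th: "\<theta> \<in> ?St"
      show "q \<theta> * (\<Sum>i=1..k. \<phi> \<theta> i * f (\<theta> i)) = (if \<theta>`{1..k} \<in> R then q \<theta> * (\<Sum>c\<in>\<theta>`{1..k}. lam (\<theta>`{1..k}) c * f c) else 0)"
      proof (cases "\<theta>`{1..k} \<in> R")
        case True then show ?thesis using sumC[OF True, of f] by (simp add: \<phi>_def)
      next
        case False
        have "q \<theta> = 0"
        proof (rule ccontr)
          assume "q \<theta> \<noteq> 0"
          then have qp: "q \<theta> > 0" using si th unfolding symmetric_instance_def is_distribution_def by force
          then have "inj_on \<theta> {1..n}" using si th unfolding symmetric_instance_def by blast
          then have "inj_on \<theta> {1..k}" by (rule inj_on_subset) (use assms(3) in auto)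
          then have c: "card (\<theta>`{1..k}) = k" by (simp add: card_image)
          have sub: "\<theta>`{1..k} \<subseteq> T" using th assms(3) unfolding states_def by auto
          have "q \<theta> \<le> qC n k T q (\<theta>`{1..k})" unfolding qC_def
            by (rule member_le_sum) (use th si finSt in \<open>auto simp: symmetric_instance_def is_distribution_def\<close>)
          with qp c sub False show False unfolding R_def relevant_sets_def by auto
        qed
        then show ?thesis using False by simp
      qed
    qed
    also have "\<dots> = (\<Sum>\<theta>\<in>{\<theta>\<in>?St. \<theta>`{1..k} \<in> R}. q \<theta> * (\<Sum>c\<in>\<theta>`{1..k}. lam (\<theta>`{1..k}) c * f c))"
      by (rule sum.inter_filter[OF finSt, symmetric])
    also have "\<dots> = (\<Sum>C\<in>R. \<Sum>\<theta>\<in>{\<theta>\<in>{\<theta>\<in>?St. \<theta>`{1..k} \<in> R}. \<theta>`{1..k} = C}. q \<theta> * (\<Sum>c\<in>\<theta>`{1..k}. lam (\<theta>`{1..k}) c * f c))"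
      by (rule sum.group[symmetric]) (use finSt finR in auto)
    also have "\<dots> = (\<Sum>C\<in>R. qC n k T q C * (\<Sum>c\<in>C. lam C c * f c))"
    proof (rule sum.cong[OF refl])
      fix C assume "C \<in> R"
      then have e: "{\<theta>\<in>{\<theta>\<in>?St. \<theta>`{1..k} \<in> R}. \<theta>`{1..k} = C} = {\<theta>\<in>?St. \<theta>`{1..k} = C}" by auto
      show "(\<Sum>\<theta>\<in>{\<theta>\<in>{\<theta>\<in>?St. \<theta>`{1..k} \<in> R}. \<theta>`{1..k} = C}. q \<theta> * (\<Sum>c\<in>\<theta>`{1..k}. lam (\<theta>`{1..k}) c * f c))
          = qC n k T q C * (\<Sum>c\<in>C. lam C c * f c)"
        unfolding e qC_def sum_distrib_right by (rule sum.cong) auto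
    qed
    finally show ?thesis .
  qed
  have fstP: "(\<Sum>c\<in>C. lam C c * \<rho> c) = fst (P C)" if "C\<in>R" for C
  proof -
    have "fst (P C) = fst (\<Sum>x\<in>C. lam C x *\<^sub>R g x)" using lam[OF that] by simp
    also have "\<dots> = (\<Sum>c\<in>C. lam C c * \<rho> c)" by (simp add: fst_sum g_def)
    finally show ?thesis by simp
  qed
  have sndP: "(\<Sum>c\<in>C. lam C c * \<xi> c) = snd (P C)" if "C\<in>R" for C
  proof -
    have "snd (P C) = snd (\<Sum>x\<in>C. lam C x *\<^sub>R g x)" using lam[OF that] by simp
    also have "\<dots> = (\<Sum>c\<in>C. lam C c * \<xi> c)" by (simp add: snd_sum g_def)
    finally show ?thesis by simp
  qed
  have uS: "scheme_utility n k T q \<xi> \<phi> = pc_utility n k T q snd P"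
    unfolding util pc_utility_def R_def[symmetric] by (rule sum.cong) (auto simp: sndP)
  have uR: "scheme_utility n k T q \<rho> \<phi> = pc_utility n k T q fst P"
    unfolding util pc_utility_def R_def[symmetric] by (rule sum.cong) (auto simp: fstP)
  have pers: "persuasive n k T q \<rho> \<phi>"
  proof -
    define A where "A i j = (\<Sum>\<theta>\<in>?St. q \<theta> * \<phi> \<theta> i * \<rho> (\<theta> j))" for i j
    define B where "B j = (\<Sum>\<theta>\<in>?St. q \<theta> * \<rho> (\<theta> j))" for j
    have Asym: "A (\<pi> i) (\<pi> j) = A i j" if p: "\<pi> permutes {1..n}" and pk: "\<pi> ` {1..k} = {1..k}" and i: "i \<in> {1..k}" for \<pi> i j
    proof -
      have "A (\<pi> i) (\<pi> j) = (\<Sum>\<theta>\<in>?St. q \<theta> * (\<phi> \<theta> (\<pi> i) * \<rho> (\<theta> (\<pi> j))))" unfolding A_def by (simp add: mult.assoc)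
      also have "\<dots> = (\<Sum>\<theta>\<in>?St. q \<theta> * (\<phi> (perm_act \<pi> \<theta>) (\<pi> i) * \<rho> (perm_act \<pi> \<theta> (\<pi> j))))"
        by (rule sum_perm_inv[OF si p, where g="\<lambda>\<theta>. \<phi> \<theta> (\<pi> i) * \<rho> (\<theta> (\<pi> j))", symmetric])
      also have "\<dots> = (\<Sum>\<theta>\<in>?St. q \<theta> * (\<phi> \<theta> i * \<rho> (\<theta> j)))"
        using scheme p pk i unfolding symmetric_scheme_def by (intro sum.cong) (auto simp: perm_act_app[OF p])
      finally show ?thesis unfolding A_def by (simp add: mult.assoc)
    qed
    have Bsym: "B (\<pi> j) = B j" if p: "\<pi> permutes {1..n}" for \<pi> j
    proof -
      have "B (\<pi> j) = (\<Sum>\<theta>\<in>?St. q \<theta> * \<rho> (perm_act \<pi> \<theta> (\<pi> j)))"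
        unfolding B_def by (rule sum_perm_inv[OF si p, where g="\<lambda>\<theta>. \<rho> (\<theta> (\<pi> j))", symmetric])
      also have "\<dots> = B j" unfolding B_def by (simp add: perm_act_app[OF p])
      finally show ?thesis .
    qed
    have tp: "Transposition.transpose a b permutes {1..n}" "Transposition.transpose a b ` {1..k} = {1..k}" if "a \<in> {1..k}" "b \<in> {1..k}" for a b
    proof -
      show "Transposition.transpose a b permutes {1..n}" using that assms(3) by (intro permutes_swap_id) auto
      show "Transposition.transpose a b ` {1..k} = {1..k}" using permutes_image[OF permutes_swap_id[OF that]] .
    qed
    have Atp: "A (Transposition.transpose a b x) (Transposition.transpose a b y) = A x y" if "a \<in> {1..k}" "b \<in> {1..k}" "x \<in> {1..k}" for a b x y
      by (rule Asym[OF tp[OF that(1,2)] that(3)])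
    have colsum: "(\<Sum>i=1..k. A i j) = B j" for j
    proof -
      have "(\<Sum>i=1..k. A i j) = (\<Sum>\<theta>\<in>?St. \<Sum>i=1..k. q \<theta> * \<phi> \<theta> i * \<rho> (\<theta> j))"
        unfolding A_def by (rule sum.swap)
      also have "\<dots> = (\<Sum>\<theta>\<in>?St. q \<theta> * \<rho> (\<theta> j) * (\<Sum>i=1..k. \<phi> \<theta> i))"
        unfolding sum_distrib_left by (intro sum.cong refl) (simp only: mult_ac)
      also have "\<dots> = B j" unfolding B_def sum1 by simp
      finally show ?thesis .
    qed
    define D where "D = A 1 1"
    have diag: "A i i = D" if "i \<in> {1..k}" for i
      using Atp[of 1 i 1 1] that assms(2) unfolding D_def by simp
    have Bc: "B j = B 1" if "j \<in> {1..n}" for j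
      using Bsym[of "Transposition.transpose 1 j" 1] that assms(2,3) by (simp add: permutes_swap_id)
    have rE: "rho_E n T q \<rho> = B 1"
    proof -
      have e1: "(\<lambda>i. \<Sum>\<theta>\<in>?St. q \<theta> * \<rho> (\<theta> i)) = B" unfolding B_def ..
      have e2: "B ` {1..n} = {B 1}"
      proof
        show "B ` {1..n} \<subseteq> {B 1}" using Bc by blast
        show "{B 1} \<subseteq> B ` {1..n}" using assms(2,3) by auto
      qed
      show ?thesis unfolding rho_E_def e1 e2 by simp
    qed
    have uRD: "scheme_utility n k T q \<rho> \<phi> = real k * D"
    proof -
      have "scheme_utility n k T q \<rho> \<phi> = (\<Sum>\<theta>\<in>?St. \<Sum>i=1..k. q \<theta> * \<phi> \<theta> i * \<rho> (\<theta> i))"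
        unfolding scheme_utility_def sum_distrib_left by (intro sum.cong refl) (simp only: mult_ac)
      also have "\<dots> = (\<Sum>i=1..k. A i i)"
        unfolding A_def by (rule sum.swap)
      also have "\<dots> = (\<Sum>i=1..k. D)" by (rule sum.cong) (auto simp: diag)
      finally show ?thesis by simp
    qed
    have BD: "B 1 \<le> real k * D" using assms(6) uR uRD rE unfolding s_Pareto_def by simp
    have key: "A i j \<le> A i i" if i: "i \<in> {1..k}" and j: "j \<in> {1..n}" for i j
    proof (cases "j \<in> {1..k}")
      case jk: True
      show ?thesis
      proof (cases "j = i")
        case True then show ?thesis by simp
      next
        case False
        have off: "A i' i = A j i" if i': "i' \<in> {1..k} - {i}" for i'
        proof -
          have i'k: "i' \<in> {1..k}" and ne: "i' \<noteq> i" using i' by auto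
          have "A (Transposition.transpose i' j i') (Transposition.transpose i' j i) = A i' i"
            by (rule Atp[OF i'k jk i'k])
          moreover have "Transposition.transpose i' j i' = j" by simp
          moreover have "Transposition.transpose i' j i = i" using ne False by simp
          ultimately show ?thesis by simp
        qed
        have sw: "A j i = A i j"
        proof -
          have "A (Transposition.transpose i j i) (Transposition.transpose i j j) = A i j"
            by (rule Atp[OF i jk i])
          then show ?thesis by simp
        qed
        have "B i = (\<Sum>i'\<in>{1..k}. A i' i)" using colsum[of i] by simp
        also have "\<dots> = A i i + (\<Sum>i'\<in>{1..k}-{i}. A i' i)"
          by (rule sum.remove) (use i in auto)
        also have "(\<Sum>i'\<in>{1..k}-{i}. A i' i) = (\<Sum>i'\<in>{1..k}-{i}. A j i)"
          by (rule sum.cong[OF refl]) (rule off)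
        also have "\<dots> = real (card ({1..k}-{i})) * A j i" by simp
        also have "card ({1..k}-{i}) = k - 1" using i by simp
        finally have Bi: "B i = D + real (k - 1) * A i j" using diag[OF i] sw by simp
        have "B i = B 1" by (rule Bc) (use i assms(3) in auto)
        have kk: "real k * D = D + real (k - 1) * D" using assms(2) by (simp add: of_nat_diff algebra_simps)
        have "real (k - 1) * A i j \<le> real (k - 1) * D"
          using Bi BD kk \<open>B i = B 1\<close> by linarith
        moreover have "real (k - 1) > 0" using assms(2) by simp
        ultimately have "A i j \<le> D" by (rule mult_left_le_imp_le)
        then show ?thesis using diag i by simp
      qed
    next
      case False
      have same: "A i' j = A i j" if i': "i' \<in> {1..k}" for i'
      proof -
        have "A (Transposition.transpose i i' i) (Transposition.transpose i i' j) = A i j"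
          by (rule Atp[OF i i' i])
        moreover have "Transposition.transpose i i' j = j" using False i i' by (intro transpose_apply_other) auto
        ultimately show ?thesis by simp
      qed
      have "B j = (\<Sum>i'\<in>{1..k}. A i' j)" using colsum[of j] by simp
      also have "\<dots> = (\<Sum>i'\<in>{1..k}. A i j)" by (rule sum.cong[OF refl]) (rule same)
      also have "\<dots> = real k * A i j" by simp
      finally have "B j = real k * A i j" .
      moreover have "B j = B 1" by (rule Bc[OF j])
      ultimately have "real k * A i j \<le> real k * D" using BD by simp
      then have "A i j \<le> D" using kpos by (rule mult_left_le_imp_le)
      then show ?thesis using diag i by simp
    qed
    show ?thesis unfolding persuasive_def cond_value_def
    proof (intro ballI impI)
      fix i j assume i: "i \<in> {1..k}" and sp: "signal_prob n T q \<phi> i > 0" and j: "j \<in> {1..n}"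
      show "(\<Sum>\<theta>\<in>?St. q \<theta> * \<phi> \<theta> i * \<rho> (\<theta> j)) / signal_prob n T q \<phi> i
            \<le> (\<Sum>\<theta>\<in>?St. q \<theta> * \<phi> \<theta> i * \<rho> (\<theta> i)) / signal_prob n T q \<phi> i"
        using key[OF i j] sp unfolding A_def by (simp add: divide_right_mono)
    qed
  qed
  show ?thesis using scheme pers uS uR by blast
qed

end
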